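(* Consider the map $f_{\mathrm{IbM}}(X)=\operatorname{diag}(|X|\mathbf{1}_n)^{-1}XX$ (the system $X(t+1)=f_{\mathrm{IbM}}(X(t))$) on the domain $\mathcal{S}^{+}_{\mathrm{rs\text{-}symm}}$. Define $Q_{\mathrm{IbM}}$ as the set of matrices $PYP^{\top}\in\mathcal{S}^{+}_{\mathrm{rs\text{-}symm}}$ where $P$ is an $n\times n$ permutation matrix and $Y$ is block diagonal with each diagonal block of the form $\operatorname{sign}(w)w^{\top}$, $w\in\mathbb{R}^m$, $|w|\succ\mathbf{0}_m$, $m\le n$ (block sizes summing to $n$). Then: (i) $Q_{\mathrm{IbM}}$ is the set of all fixed points of $f_{\mathrm{IbM}}$ in $\mathcal{S}^{+}_{\mathrm{rs\text{-}symm}}$; (ii) for every $X\in Q_{\mathrm{IbM}}$, $G(X)$ is composed of isolated complete subgraphs that satisfy social balance, i.e., there is a partition of $\{1,\dots,n\}$ into sets $V_1,\dots,V_K$ such that $X_{ij}=0$ whenever $i,j$ lie in different sets, and for each $k$ the principal submatrix of $X$ indexed by $V_k$ has all entries non-zero and its graph satisfies social balance.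
   Context: $|X|$ is entry-wise absolute value, $\mathbf{1}_n$ the all-ones vector, $\operatorname{sign}$ entry-wise sign, $\succ$ entry-wise strict inequality. $\mathcal{S}^{+}_{\mathrm{rs\text{-}symm}}=\{X\in\mathbb{R}^{n\times n}:\operatorname{sign}(X)=\operatorname{sign}(X)^{\top},\ X_{ii}>0\ \forall i,\ \exists\gamma\succ\mathbf{0}_n\text{ with }\operatorname{diag}(\gamma)X=(\operatorname{diag}(\gamma)X)^{\top}\}$. $G(Z)$ is the weighted digraph with adjacency matrix $Z$; it satisfies social balance if $Z_{ii}>0$ for all $i$ and $\operatorname{sign}(Z_{ij})\operatorname{sign}(Z_{jk})\operatorname{sign}(Z_{ki})=1$ for all $i,j,k$. *)

theory Defs
  imports "Jordan_Normal_Form.Matrix" "Jordan_Normal_Form.DL_Submatrix"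
    "HOL-Library.Disjoint_Sets" "HOL-Combinatorics.Permutations"
begin

definition abs_mat :: "real mat \<Rightarrow> real mat" where
  "abs_mat X = map_mat abs X"

definition sign_mat :: "real mat \<Rightarrow> real mat" where
  "sign_mat X = map_mat sgn X"

definition diag_of_vec :: "real vec \<Rightarrow> real mat" where
  "diag_of_vec v = mat_diag (dim_vec v) (\<lambda>i. v $ i)"

text \<open>f_IbM(X) = diag(|X| 1_n)^{-1} X X ; the inverse of a diagonal matrix
  is the diagonal matrix of reciprocals.\<close>
definition f_IbM :: "nat \<Rightarrow> real mat \<Rightarrow> real mat" where
  "f_IbM n X = diag_of_vec (map_vec inverse (abs_mat X *\<^sub>v (vec n (\<lambda>_. 1)))) * X * X"

definition S_rs_symm :: "nat \<Rightarrow> real mat set" where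
  "S_rs_symm n = {X \<in> carrier_mat n n.
     sign_mat X = transpose_mat (sign_mat X) \<and>
     (\<forall>i<n. X $$ (i,i) > 0) \<and>
     (\<exists>\<gamma>. dim_vec \<gamma> = n \<and> (\<forall>i<n. \<gamma> $ i > 0) \<and>
          diag_of_vec \<gamma> * X = transpose_mat (diag_of_vec \<gamma> * X))}"

definition perm_matrix :: "nat \<Rightarrow> (nat \<Rightarrow> nat) \<Rightarrow> real mat" where
  "perm_matrix n p = mat n n (\<lambda>(i,j). if p i = j then 1 else 0)"

definition sign_outer :: "real vec \<Rightarrow> real mat" where
  "sign_outer w = mat (dim_vec w) (dim_vec w) (\<lambda>(i,j). sgn (w $ i) * w $ j)"

definition Q_IbM :: "nat \<Rightarrow> real mat set" where
  "Q_IbM n = {X. X \<in> S_rs_symm n \<and>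
     (\<exists>p ws. p permutes {..<n} \<and>
        (\<forall>w\<in>set ws. dim_vec w \<le> n \<and> (\<forall>i<dim_vec w. \<bar>w $ i\<bar> > 0)) \<and>
        sum_list (map dim_vec ws) = n \<and>
        X = perm_matrix n p * diag_block_mat (map sign_outer ws) * transpose_mat (perm_matrix n p))}"

definition social_balance :: "real mat \<Rightarrow> bool" where
  "social_balance Z \<longleftrightarrow> (let m = dim_row Z in
     (\<forall>i<m. Z $$ (i,i) > 0) \<and>
     (\<forall>i<m. \<forall>j<m. \<forall>k<m. sgn (Z $$ (i,j)) * sgn (Z $$ (j,k)) * sgn (Z $$ (k,i)) = 1))"

end

theory Submission
  imports Defs
begin


lemma sum_abs_eq_sgn:
  fixes a :: "nat \<Rightarrow> real"
  assumes "finite A" "m \<in> A" "(\<Sum>k\<in>A. \<bar>a k\<bar>) = \<bar>\<Sum>k\<in>A. a k\<bar>" "a m \<noteq> 0"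
  shows "sgn (a m) = sgn (\<Sum>k\<in>A. a k)"
proof (cases "(\<Sum>k\<in>A. a k) \<ge> 0")
  case True
  have "(\<Sum>k\<in>A. \<bar>a k\<bar> - a k) = 0" using assms(3) True by (simp add: sum_subtractf)
  then have "\<forall>k\<in>A. \<bar>a k\<bar> - a k = 0" using assms(1) by (subst sum_nonneg_eq_0_iff[symmetric]) auto
  then have p: "a m > 0" using assms by force
  have "\<bar>a m\<bar> \<le> (\<Sum>k\<in>A. \<bar>a k\<bar>)" using assms by (intro member_le_sum) auto
  then have "(\<Sum>k\<in>A. a k) > 0" using assms(3) True p by auto
  then show ?thesis using p by simp
next
  case False
  have "(\<Sum>k\<in>A. \<bar>a k\<bar> + a k) = 0" using assms(3) False by (simp add: sum.distrib)
  then have "\<forall>k\<in>A. \<bar>a k\<bar> + a k = 0" using assms(1) by (subst sum_nonneg_eq_0_iff[symmetric]) auto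
  then have p: "a m < 0" using assms by force
  then show ?thesis using False by simp
qed

lemma core:
  fixes x :: "nat \<Rightarrow> nat \<Rightarrow> real" and g :: "nat \<Rightarrow> real"
  assumes gpos: "\<forall>i<n. g i > 0"
   and gsym: "\<forall>i<n. \<forall>k<n. g i * x i k = g k * x k i"
   and fixp: "\<forall>i<n. \<forall>j<n. (\<Sum>k<n. \<bar>x i k\<bar>) * x i j = (\<Sum>k<n. x i k * x k j)"
   and j: "j < n"
  shows "(\<forall>i<n. \<forall>k<n. x i k \<noteq> 0 \<longrightarrow> \<bar>x i j\<bar> = \<bar>x k j\<bar>) \<and>
         (\<forall>i<n. x i j \<noteq> 0 \<longrightarrow> (\<Sum>k<n. \<bar>x i k * x k j\<bar>) = \<bar>\<Sum>k<n. x i k * x k j\<bar>)"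
proof -
  define c where "c k = \<bar>x k j\<bar>" for k
  define d where "d i = (\<Sum>k<n. \<bar>x i k\<bar>)" for i
  define s where "s i k = g i * \<bar>x i k\<bar>" for i k
  have ssym: "s i k = s k i" if "i < n" "k < n" for i k
  proof -
    have "\<bar>g i * x i k\<bar> = \<bar>g k * x k i\<bar>" using gsym that by auto
    moreover have "g i > 0" "g k > 0" using gpos that by auto
    ultimately show ?thesis unfolding s_def by (simp add: abs_mult)
  qed
  have snn: "s i k \<ge> 0" if "i < n" for i k
  proof -
    have "g i > 0" using gpos that by auto
    then show ?thesis unfolding s_def by simp
  qed
  have dnn: "d i \<ge> 0" for i unfolding d_def by (simp add: sum_nonneg)
  have sub: "d i * c i \<le> (\<Sum>k<n. \<bar>x i k\<bar> * c k)" if "i < n" for i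
  proof -
    have "d i * c i = \<bar>d i * x i j\<bar>" using dnn unfolding c_def by (simp add: abs_mult)
    also have "\<dots> = \<bar>\<Sum>k<n. x i k * x k j\<bar>" using fixp that j unfolding d_def by auto
    also have "\<dots> \<le> (\<Sum>k<n. \<bar>x i k * x k j\<bar>)" by (rule sum_abs)
    also have "\<dots> = (\<Sum>k<n. \<bar>x i k\<bar> * c k)" unfolding c_def by (simp add: abs_mult)
    finally show ?thesis .
  qed
  define T where "T i = g i * c i * (d i * c i - (\<Sum>k<n. \<bar>x i k\<bar> * c k))" for i
  have Tnp: "T i \<le> 0" if "i < n" for i
  proof -
    have "g i > 0" using gpos that by auto
    then have "g i * c i \<ge> 0" unfolding c_def by simp
    then show ?thesis unfolding T_def using sub[OF that] by (simp add: mult_nonneg_nonpos)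
  qed
  have S1: "(\<Sum>i<n. \<Sum>k<n. s i k * c i ^ 2) = (\<Sum>i<n. g i * c i ^ 2 * d i)"
    unfolding s_def d_def by (simp add: sum_distrib_left sum_distrib_right algebra_simps)
  have S3: "(\<Sum>i<n. \<Sum>k<n. s i k * c k ^ 2) = (\<Sum>i<n. \<Sum>k<n. s i k * c i ^ 2)"
  proof -
    have "(\<Sum>i<n. \<Sum>k<n. s i k * c k ^ 2) = (\<Sum>k<n. \<Sum>i<n. s i k * c k ^ 2)" by (rule sum.swap)
    also have "\<dots> = (\<Sum>k<n. \<Sum>i<n. s k i * c k ^ 2)" using ssym by (intro sum.cong) auto
    finally show ?thesis .
  qed
  have S2: "(\<Sum>i<n. \<Sum>k<n. s i k * (c i * c k)) = (\<Sum>i<n. g i * c i * (\<Sum>k<n. \<bar>x i k\<bar> * c k))"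
    unfolding s_def by (simp add: sum_distrib_left algebra_simps)
  have E: "(\<Sum>i<n. \<Sum>k<n. s i k * (c i - c k)^2) = 2 * (\<Sum>i<n. T i)"
  proof -
    have "(\<Sum>i<n. \<Sum>k<n. s i k * (c i - c k)^2) =
      (\<Sum>i<n. \<Sum>k<n. s i k * c i ^ 2) + (\<Sum>i<n. \<Sum>k<n. s i k * c k ^ 2) - 2 * (\<Sum>i<n. \<Sum>k<n. s i k * (c i * c k))"
      by (simp add: power2_diff algebra_simps sum.distrib sum_subtractf sum_distrib_left)
    also have "\<dots> = 2 * (\<Sum>i<n. g i * c i ^ 2 * d i) - 2 * (\<Sum>i<n. g i * c i * (\<Sum>k<n. \<bar>x i k\<bar> * c k))"
      using S1 S2 S3 by simp
    also have "\<dots> = 2 * (\<Sum>i<n. T i)"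
      unfolding T_def by (simp add: sum_subtractf algebra_simps power2_eq_square sum_distrib_left)
    finally show ?thesis .
  qed
  have Enn: "(\<Sum>i<n. \<Sum>k<n. s i k * (c i - c k)^2) \<ge> 0"
    using snn by (intro sum_nonneg) auto
  have Tsum: "(\<Sum>i<n. T i) \<le> 0" using Tnp by (intro sum_nonpos) auto
  have E0: "(\<Sum>i<n. \<Sum>k<n. s i k * (c i - c k)^2) = 0" using E Enn Tsum by linarith
  have inner: "\<forall>i\<in>{..<n}. (\<Sum>k<n. s i k * (c i - c k)^2) = 0"
    using E0 snn by (subst sum_nonneg_eq_0_iff[symmetric]) (auto intro!: sum_nonneg)
  have each: "s i k * (c i - c k)^2 = 0" if "i < n" "k < n" for i k
  proof -
    have "\<forall>k\<in>{..<n}. s i k * (c i - c k)^2 = 0"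
      using inner that snn by (subst sum_nonneg_eq_0_iff[symmetric]) auto
    then show ?thesis using that by auto
  qed
  have part1: "\<forall>i<n. \<forall>k<n. x i k \<noteq> 0 \<longrightarrow> \<bar>x i j\<bar> = \<bar>x k j\<bar>"
  proof (intro allI impI)
    fix i k assume h: "i < n" "k < n" "x i k \<noteq> 0"
    moreover have "g i > 0" using gpos h by auto
    ultimately have "s i k > 0" unfolding s_def by simp
    then have "(c i - c k)^2 = 0" using each[OF h(1,2)] by simp
    then show "\<bar>x i j\<bar> = \<bar>x k j\<bar>" unfolding c_def by simp
  qed
  have T0: "\<forall>i\<in>{..<n}. - T i = 0"
    using E0 E Tnp by (subst sum_nonneg_eq_0_iff[symmetric]) (auto simp: sum_negf)
  have part2: "\<forall>i<n. x i j \<noteq> 0 \<longrightarrow> (\<Sum>k<n. \<bar>x i k * x k j\<bar>) = \<bar>\<Sum>k<n. x i k * x k j\<bar>"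
  proof (intro allI impI)
    fix i assume h: "i < n" "x i j \<noteq> 0"
    moreover have "g i > 0" using gpos h by auto
    ultimately have "g i * c i \<noteq> 0" unfolding c_def by simp
    then have "d i * c i = (\<Sum>k<n. \<bar>x i k\<bar> * c k)" using T0 h unfolding T_def by auto
    moreover have "d i * c i = \<bar>d i * x i j\<bar>" using dnn[of i] unfolding c_def by (simp add: abs_mult)
    moreover have "d i * x i j = (\<Sum>k<n. x i k * x k j)" using fixp h j unfolding d_def by auto
    ultimately show "(\<Sum>k<n. \<bar>x i k * x k j\<bar>) = \<bar>\<Sum>k<n. x i k * x k j\<bar>"
      unfolding c_def by (simp add: abs_mult)
  qed
  show ?thesis using part1 part2 by blast
qed

lemma core_block:
  fixes x :: "nat \<Rightarrow> nat \<Rightarrow> real" and g :: "nat \<Rightarrow> real"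
  assumes gpos: "\<forall>i<n. g i > 0"
   and gsym: "\<forall>i<n. \<forall>k<n. g i * x i k = g k * x k i"
   and fixp: "\<forall>i<n. \<forall>j<n. (\<Sum>k<n. \<bar>x i k\<bar>) * x i j = (\<Sum>k<n. x i k * x k j)"
   and dpos: "\<forall>i<n. x i i > 0"
  shows "\<exists>b W. (\<forall>i<n. W i \<noteq> (0::real)) \<and> (\<forall>i<n. \<forall>j<n. x i j = (if (b i::nat) = b j then sgn (W i) * W j else 0))"
proof -
  have A: "\<bar>x i j\<bar> = \<bar>x k j\<bar>" if "i < n" "j < n" "k < n" "x i k \<noteq> 0" for i j k
    using core[OF gpos gsym fixp, of j] that by blast
  have sgnsym: "sgn (x i k) = sgn (x k i)" if "i < n" "k < n" for i k
  proof -
    have "sgn (g i * x i k) = sgn (g k * x k i)" using gsym that by auto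
    moreover have "g i > 0" "g k > 0" using gpos that by auto
    ultimately show ?thesis by (simp add: sgn_mult)
  qed
  have nzsym: "x k i \<noteq> 0" if "i < n" "k < n" "x i k \<noteq> 0" for i k
    using sgnsym[OF that(1,2)] that(3) by (metis sgn_0_0 sgn_zero_iff)
  have Sg: "sgn (x i k * x k j) = sgn (x i j)"
    if "i < n" "j < n" "k < n" "x i j \<noteq> 0" "x i k * x k j \<noteq> 0" for i j k
  proof -
    have eq: "(\<Sum>k<n. \<bar>x i k * x k j\<bar>) = \<bar>\<Sum>k<n. x i k * x k j\<bar>"
      using core[OF gpos gsym fixp, of j] that by blast
    have "sgn (x i k * x k j) = sgn (\<Sum>k<n. x i k * x k j)"
      using sum_abs_eq_sgn[of "{..<n}" k "\<lambda>k. x i k * x k j"] eq that by auto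
    also have "\<dots> = sgn ((\<Sum>k<n. \<bar>x i k\<bar>) * x i j)" using fixp that by auto
    also have "(\<Sum>k<n. \<bar>x i k\<bar>) > 0"
    proof -
      have "\<bar>x i i\<bar> \<le> (\<Sum>k<n. \<bar>x i k\<bar>)" using that by (intro member_le_sum) auto
      then show ?thesis using dpos that by auto
    qed
    then have "sgn ((\<Sum>k<n. \<bar>x i k\<bar>) * x i j) = sgn (x i j)" by (simp add: sgn_mult)
    finally show ?thesis .
  qed
  have trans: "x i j \<noteq> 0" if "i < n" "j < n" "k < n" "x i k \<noteq> 0" "x k j \<noteq> 0" for i j k
    using A[OF that(1,2,3,4)] that(5) by auto
  define b where "b i = (LEAST k. k < n \<and> x i k \<noteq> 0)" for i
  have bprop: "b i < n \<and> x i (b i) \<noteq> 0" if "i < n" for i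
  proof -
    have "i < n \<and> x i i \<noteq> 0" using dpos that by auto
    then show ?thesis unfolding b_def by (rule LeastI)
  qed
  have beq: "b i = b j \<longleftrightarrow> x i j \<noteq> 0" if "i < n" "j < n" for i j
  proof
    assume "b i = b j"
    then have "x i (b j) \<noteq> 0" "x j (b j) \<noteq> 0" "b j < n" using bprop that by metis+
    then show "x i j \<noteq> 0" using trans nzsym that by metis
  next
    assume h: "x i j \<noteq> 0"
    have "(\<lambda>k. k < n \<and> x i k \<noteq> 0) = (\<lambda>k. k < n \<and> x j k \<noteq> 0)"
    proof (intro ext iffI)
      fix k assume "k < n \<and> x i k \<noteq> 0"
      then show "k < n \<and> x j k \<noteq> 0" using trans[of j k i] nzsym[of i j] h that by blast
    next
      fix k assume "k < n \<and> x j k \<noteq> 0"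
      then show "k < n \<and> x i k \<noteq> 0" using trans[of i k j] h that by blast
    qed
    then show "b i = b j" unfolding b_def by simp
  qed
  define W where "W j = sgn (x j (b j)) * x j j" for j
  have Wnz: "\<forall>i<n. W i \<noteq> 0" using bprop dpos unfolding W_def by (metis less_irrefl mult_eq_0_iff sgn_zero_iff)
  have sW: "sgn (W i) = sgn (x i (b i))" if "i < n" for i
    using dpos that unfolding W_def by (simp add: sgn_mult)
  have main: "x i j = (if b i = b j then sgn (W i) * W j else 0)" if "i < n" "j < n" for i j
  proof (cases "b i = b j")
    case True
    define r where "r = b i"
    have nz: "x i j \<noteq> 0" using beq that True by auto
    have r: "r < n" "x i r \<noteq> 0" "x j r \<noteq> 0" using bprop that True unfolding r_def by metis+
    have xrj: "x r j \<noteq> 0" using nzsym r that by blast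
    have "sgn (x i j) = sgn (x i r * x r j)" using Sg[of i j r] nz r xrj that by auto
    also have "\<dots> = sgn (x i r) * sgn (x j r)" using sgnsym r that by (simp add: sgn_mult)
    finally have s: "sgn (x i j) = sgn (x i r) * sgn (x j r)" .
    have ab: "\<bar>x i j\<bar> = x j j" using A[of i j j] nz that dpos by auto
    have "x i j = sgn (x i j) * \<bar>x i j\<bar>" by (simp add: sgn_mult_abs)
    also have "\<dots> = sgn (x i r) * (sgn (x j r) * x j j)" using s ab by simp
    also have "\<dots> = sgn (W i) * W j" using sW[OF that(1)] True unfolding W_def r_def by simp
    finally show ?thesis using True by simp
  next
    case False
    then show ?thesis using beq that by auto
  qed
  show ?thesis using Wnz main by blast
qed



lemma f_entry:
  assumes X: "X \<in> carrier_mat n n" and i: "i < n" and j: "j < n"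
  shows "f_IbM n X $$ (i,j) = inverse (\<Sum>k<n. \<bar>X $$ (i,k)\<bar>) * (\<Sum>k<n. X $$ (i,k) * X $$ (k,j))"
proof -
  define v where "v = map_vec inverse (abs_mat X *\<^sub>v (vec n (\<lambda>_. 1)))"
  have dv: "dim_vec v = n" using X unfolding v_def abs_mat_def by simp
  have vi: "v $ i = inverse (\<Sum>k<n. \<bar>X $$ (i,k)\<bar>)"
    using X i unfolding v_def abs_mat_def by (simp add: scalar_prod_def atLeast0LessThan)
  have "diag_of_vec v * X = mat n n (\<lambda>(i,j). v $ i * X $$ (i,j))"
    unfolding diag_of_vec_def dv by (rule mat_diag_mult_left[OF X])
  then have "f_IbM n X = mat n n (\<lambda>(i,j). v $ i * X $$ (i,j)) * X"
    unfolding f_IbM_def v_def by simp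
  then have "f_IbM n X $$ (i,j) = (\<Sum>k<n. v $ i * X $$ (i,k) * X $$ (k,j))"
    using X i j by (simp add: scalar_prod_def atLeast0LessThan)
  also have "\<dots> = v $ i * (\<Sum>k<n. X $$ (i,k) * X $$ (k,j))"
    by (simp add: sum_distrib_left mult.assoc)
  finally show ?thesis using vi by simp
qed

lemma gamma_entry:
  assumes X: "X \<in> carrier_mat n n" and g: "dim_vec g = n"
    and eq: "diag_of_vec g * X = transpose_mat (diag_of_vec g * X)"
    and i: "i < n" and k: "k < n"
  shows "g $ i * X $$ (i,k) = g $ k * X $$ (k,i)"
proof -
  have M: "diag_of_vec g * X = mat n n (\<lambda>(i,j). g $ i * X $$ (i,j))"
    unfolding diag_of_vec_def g by (rule mat_diag_mult_left[OF X])
  have "(diag_of_vec g * X) $$ (i,k) = (transpose_mat (diag_of_vec g * X)) $$ (i,k)" using eq by simp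
  then show ?thesis unfolding M using i k by simp
qed

definition blockform :: "nat \<Rightarrow> real mat \<Rightarrow> bool" where
  "blockform n X \<longleftrightarrow> X \<in> carrier_mat n n \<and> (\<exists>b W. (\<forall>i<n. W i \<noteq> (0::real)) \<and>
     (\<forall>i<n. \<forall>j<n. X $$ (i,j) = (if (b i::nat) = b j then sgn (W i) * W j else 0)))"

lemma fix_blockform:
  assumes "X \<in> S_rs_symm n" "f_IbM n X = X"
  shows "blockform n X"
proof -
  have X: "X \<in> carrier_mat n n" and dp: "\<forall>i<n. X $$ (i,i) > 0" using assms(1) unfolding S_rs_symm_def by auto
  obtain g where g: "dim_vec g = n" "\<forall>i<n. g $ i > 0" "diag_of_vec g * X = transpose_mat (diag_of_vec g * X)"
    using assms(1) unfolding S_rs_symm_def by auto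
  define x where "x i j = X $$ (i,j)" for i j
  have gsym: "\<forall>i<n. \<forall>k<n. g $ i * x i k = g $ k * x k i"
    using gamma_entry[OF X g(1) g(3)] unfolding x_def by auto
  have fixp: "\<forall>i<n. \<forall>j<n. (\<Sum>k<n. \<bar>x i k\<bar>) * x i j = (\<Sum>k<n. x i k * x k j)"
  proof (intro allI impI)
    fix i j assume ij: "i < n" "j < n"
    have "\<bar>x i i\<bar> \<le> (\<Sum>k<n. \<bar>x i k\<bar>)" using ij by (intro member_le_sum) auto
    then have pos: "(\<Sum>k<n. \<bar>x i k\<bar>) > 0" using dp ij unfolding x_def by auto
    have "x i j = f_IbM n X $$ (i,j)" using assms(2) unfolding x_def by simp
    also have "\<dots> = inverse (\<Sum>k<n. \<bar>x i k\<bar>) * (\<Sum>k<n. x i k * x k j)"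
      unfolding x_def by (rule f_entry[OF X ij])
    finally show "(\<Sum>k<n. \<bar>x i k\<bar>) * x i j = (\<Sum>k<n. x i k * x k j)"
      using pos by (simp add: field_simps)
  qed
  have "\<forall>i<n. x i i > 0" using dp unfolding x_def by auto
  from core_block[OF g(2) gsym fixp this] show ?thesis
    using X unfolding blockform_def x_def by auto
qed

lemma blockform_fix:
  assumes "blockform n X"
  shows "f_IbM n X = X"
proof -
  obtain b W where X: "X \<in> carrier_mat n n" and W: "\<forall>i<n. W i \<noteq> (0::real)"
    and e: "\<forall>i<n. \<forall>j<n. X $$ (i,j) = (if (b i::nat) = b j then sgn (W i) * W j else 0)"
    using assms unfolding blockform_def by auto
  show ?thesis
  proof (rule eq_matI)
    fix i j assume i: "i < dim_row X" and j: "j < dim_col X"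
    then have ij: "i < n" "j < n" using X by auto
    have tm: "X $$ (i,k) * X $$ (k,j) = X $$ (i,j) * \<bar>X $$ (i,k)\<bar>" if "k < n" for k
      using e ij that by (auto simp: abs_mult sgn_mult algebra_simps abs_sgn)
    have "\<bar>X $$ (i,i)\<bar> \<le> (\<Sum>k<n. \<bar>X $$ (i,k)\<bar>)" using ij by (intro member_le_sum) auto
    moreover have "\<bar>X $$ (i,i)\<bar> > 0" using e W ij by (simp add: abs_mult)
    ultimately have pos: "(\<Sum>k<n. \<bar>X $$ (i,k)\<bar>) > 0" by linarith
    have "(\<Sum>k<n. X $$ (i,k) * X $$ (k,j)) = X $$ (i,j) * (\<Sum>k<n. \<bar>X $$ (i,k)\<bar>)"
      using tm by (simp add: sum_distrib_left)
    then show "f_IbM n X $$ (i,j) = X $$ (i,j)" using f_entry[OF X ij] pos by simp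
  next
    show "dim_row (f_IbM n X) = dim_row X" "dim_col (f_IbM n X) = dim_col X"
      using X unfolding f_IbM_def diag_of_vec_def abs_mat_def mat_diag_def by auto
  qed
qed



lemma blockform_part2:
  assumes "blockform n X"
  shows "\<exists>Vs. partition_on {..<n} Vs \<and>
           (\<forall>i<n. \<forall>j<n. (\<not> (\<exists>V\<in>Vs. i \<in> V \<and> j \<in> V)) \<longrightarrow> X $$ (i,j) = 0) \<and>
           (\<forall>V\<in>Vs. (\<forall>i\<in>V. \<forall>j\<in>V. X $$ (i,j) \<noteq> 0) \<and>
                    social_balance (submatrix X V V))"
proof -
  obtain b W where X: "X \<in> carrier_mat n n" and W: "\<forall>i<n. W i \<noteq> (0::real)"
    and e: "\<forall>i<n. \<forall>j<n. X $$ (i,j) = (if (b i::nat) = b j then sgn (W i) * W j else 0)"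
    using assms unfolding blockform_def by auto
  define cl where "cl i = {k. k < n \<and> b k = b i}" for i
  define Vs where "Vs = cl ` {..<n}"
  have part: "partition_on {..<n} Vs"
  proof (rule partition_onI)
    show "\<Union> Vs = {..<n}" unfolding Vs_def cl_def by auto
    show "disjnt p q" if "p \<in> Vs" "q \<in> Vs" "p \<noteq> q" for p q
      using that unfolding Vs_def cl_def disjnt_def by auto
    show "{} \<notin> Vs" unfolding Vs_def cl_def by auto
  qed
  have zero: "\<forall>i<n. \<forall>j<n. (\<not> (\<exists>V\<in>Vs. i \<in> V \<and> j \<in> V)) \<longrightarrow> X $$ (i,j) = 0"
  proof (intro allI impI)
    fix i j assume h: "i < n" "j < n" "\<not> (\<exists>V\<in>Vs. i \<in> V \<and> j \<in> V)"
    have "b i \<noteq> b j"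
    proof
      assume "b i = b j"
      then have "cl i \<in> Vs \<and> i \<in> cl i \<and> j \<in> cl i" using h unfolding Vs_def cl_def by auto
      then show False using h by blast
    qed
    then show "X $$ (i,j) = 0" using e h by auto
  qed
  have inV: "\<forall>V\<in>Vs. (\<forall>i\<in>V. \<forall>j\<in>V. X $$ (i,j) \<noteq> 0) \<and> social_balance (submatrix X V V)"
  proof
    fix V assume "V \<in> Vs"
    then obtain r where r: "r < n" "V = cl r" unfolding Vs_def by auto
    have Vsub: "\<And>i. i \<in> V \<Longrightarrow> i < n \<and> b i = b r" using r unfolding cl_def by auto
    have ent: "X $$ (i,j) = sgn (W i) * W j" if "i \<in> V" "j \<in> V" for i j
      using e Vsub[OF that(1)] Vsub[OF that(2)] by auto
    have nz: "\<forall>i\<in>V. \<forall>j\<in>V. X $$ (i,j) \<noteq> 0"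
      using ent W Vsub by (auto simp: sgn_zero_iff)
    have sgnent: "sgn (X $$ (i,j)) = sgn (W i) * sgn (W j)" if "i \<in> V" "j \<in> V" for i j
      using ent[OF that] by (simp add: sgn_mult)
    have sq: "sgn (W i) * sgn (W i) = 1" if "i \<in> V" for i
      using W Vsub[OF that] by (auto simp: sgn_real_def)
    have setV: "{i. i < dim_row X \<and> i \<in> V} = V" using X Vsub by auto
    have pk: "pick V a \<in> V" if "a < card V" for a
      using that by (intro pick_in_set) auto
    have dims: "dim_row (submatrix X V V) = card V"
      using setV by (simp add: dim_submatrix)
    have sidx: "submatrix X V V $$ (a,c) = X $$ (pick V a, pick V c)" if "a < card V" "c < card V" for a c
      using that setV X by (intro submatrix_index) auto
    have "social_balance (submatrix X V V)"
      unfolding social_balance_def Let_def dims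
    proof (intro conjI allI impI)
      fix i assume i: "i < card V"
      have "X $$ (pick V i, pick V i) = \<bar>W (pick V i)\<bar>" using ent[OF pk[OF i] pk[OF i]]
        by (simp add: sgn_real_def abs_if)
      then show "submatrix X V V $$ (i,i) > 0" using sidx[OF i i] W Vsub[OF pk[OF i]] by simp
    next
      fix i j k assume ijk: "i < card V" "j < card V" "k < card V"
      let ?s = "\<lambda>a. sgn (W (pick V a))"
      have "sgn (submatrix X V V $$ (i,j)) * sgn (submatrix X V V $$ (j,k)) * sgn (submatrix X V V $$ (k,i))
         = (?s i * ?s i) * (?s j * ?s j) * (?s k * ?s k)"
        using ijk sidx sgnent pk by (simp add: algebra_simps)
      also have "\<dots> = 1" using sq pk ijk by simp
      finally show "sgn (submatrix X V V $$ (i,j)) * sgn (submatrix X V V $$ (j,k)) * sgn (submatrix X V V $$ (k,i)) = 1" .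
    qed
    then show "(\<forall>i\<in>V. \<forall>j\<in>V. X $$ (i,j) \<noteq> 0) \<and> social_balance (submatrix X V V)" using nz by blast
  qed
  show ?thesis using part zero inV by blast
qed



lemma dbm_blockform:
  assumes "\<forall>w\<in>set ws. \<forall>i<dim_vec w. w $ i \<noteq> 0"
  shows "blockform (sum_list (map dim_vec ws)) (diag_block_mat (map sign_outer ws))"
  using assms
proof (induction ws)
  case Nil
  then show ?case unfolding blockform_def by auto
next
  case (Cons w ws)
  define N where "N = sum_list (map dim_vec ws)"
  define m where "m = dim_vec w"
  define B where "B = diag_block_mat (map sign_outer ws)"
  define A where "A = sign_outer w"
  obtain b W where B: "B \<in> carrier_mat N N" and W: "\<forall>i<N. W i \<noteq> (0::real)"
    and e: "\<forall>i<N. \<forall>j<N. B $$ (i,j) = (if (b i::nat) = b j then sgn (W i) * W j else 0)"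
    using Cons unfolding blockform_def N_def B_def by auto
  have A: "A \<in> carrier_mat m m" unfolding A_def m_def sign_outer_def by auto
  have wnz: "\<forall>i<m. w $ i \<noteq> 0" using Cons.prems unfolding m_def by auto
  have D: "diag_block_mat (map sign_outer (w # ws)) = four_block_mat A (0\<^sub>m m N) (0\<^sub>m N m) B"
    using A B unfolding A_def B_def by (simp add: Let_def)
  define b' where "b' i = (if i < m then 0 else Suc (b (i - m)))" for i
  define W' where "W' i = (if i < m then w $ i else W (i - m))" for i
  have "sum_list (map dim_vec (w # ws)) = m + N" unfolding m_def N_def by simp
  moreover have "four_block_mat A (0\<^sub>m m N) (0\<^sub>m N m) B \<in> carrier_mat (m + N) (m + N)"
    using A B by auto
  moreover have "\<forall>i<m + N. W' i \<noteq> 0" using W wnz unfolding W'_def by auto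
  moreover have "\<forall>i<m+N. \<forall>j<m+N. four_block_mat A (0\<^sub>m m N) (0\<^sub>m N m) B $$ (i,j) =
      (if b' i = b' j then sgn (W' i) * W' j else 0)"
    using A B e unfolding b'_def W'_def A_def by (auto simp: sign_outer_def m_def)
  ultimately show ?case unfolding D blockform_def by metis
qed

lemma perm_conj_entry:
  assumes p: "p permutes {..<n}" and D: "D \<in> carrier_mat n n" and i: "i < n" and j: "j < n"
  shows "(perm_matrix n p * D * transpose_mat (perm_matrix n p)) $$ (i,j) = D $$ (p i, p j)"
proof -
  have pn: "p k < n" if "k < n" for k using permutes_in_image[OF p] that by auto
  have PD: "perm_matrix n p * D = mat n n (\<lambda>(i,k). D $$ (p i, k))"
  proof (rule eq_matI)
    fix a c assume "a < dim_row (mat n n (\<lambda>(i,k). D $$ (p i, k)))" "c < dim_col (mat n n (\<lambda>(i,k). D $$ (p i, k)))"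
    then have ac: "a < n" "c < n" by auto
    have "(perm_matrix n p * D) $$ (a,c) = (\<Sum>l<n. (if p a = l then 1 else 0) * D $$ (l,c))"
      using ac D unfolding perm_matrix_def by (simp add: scalar_prod_def atLeast0LessThan)
    also have "\<dots> = (\<Sum>l<n. if p a = l then D $$ (l,c) else 0)" by (intro sum.cong) auto
    also have "\<dots> = D $$ (p a, c)" using pn[OF ac(1)] by (simp add: sum.delta)
    finally show "(perm_matrix n p * D) $$ (a,c) = mat n n (\<lambda>(i,k). D $$ (p i, k)) $$ (a,c)" using ac by simp
  qed (use D in \<open>auto simp: perm_matrix_def\<close>)
  have "(mat n n (\<lambda>(i,k). D $$ (p i, k)) * transpose_mat (perm_matrix n p)) $$ (i,j)
      = (\<Sum>l<n. D $$ (p i, l) * (if p j = l then 1 else 0))"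
    using i j unfolding perm_matrix_def by (simp add: scalar_prod_def atLeast0LessThan)
  also have "\<dots> = (\<Sum>l<n. if p j = l then D $$ (p i, l) else 0)" by (intro sum.cong) auto
  also have "\<dots> = D $$ (p i, p j)" using pn[OF j] by (simp add: sum.delta)
  finally show ?thesis unfolding PD .
qed

lemma Q_blockform:
  assumes "X \<in> Q_IbM n"
  shows "blockform n X"
proof -
  obtain p ws where p: "p permutes {..<n}" and ws: "\<forall>w\<in>set ws. dim_vec w \<le> n \<and> (\<forall>i<dim_vec w. \<bar>w $ i\<bar> > 0)"
    and sl: "sum_list (map dim_vec ws) = n"
    and Xe: "X = perm_matrix n p * diag_block_mat (map sign_outer ws) * transpose_mat (perm_matrix n p)"
    and XS: "X \<in> S_rs_symm n"
    using assms unfolding Q_IbM_def by blast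
  have "blockform n (diag_block_mat (map sign_outer ws))"
    using dbm_blockform[of ws] ws sl by auto
  then obtain b W where D: "diag_block_mat (map sign_outer ws) \<in> carrier_mat n n" and W: "\<forall>i<n. W i \<noteq> (0::real)"
    and e: "\<forall>i<n. \<forall>j<n. diag_block_mat (map sign_outer ws) $$ (i,j) = (if (b i::nat) = b j then sgn (W i) * W j else 0)"
    unfolding blockform_def by blast
  have pn: "p k < n" if "k < n" for k using permutes_in_image[OF p] that by auto
  have X: "X \<in> carrier_mat n n" using XS unfolding S_rs_symm_def by auto
  have "\<forall>i<n. \<forall>j<n. X $$ (i,j) = (if (b \<circ> p) i = (b \<circ> p) j then sgn ((W \<circ> p) i) * (W \<circ> p) j else 0)"
    using perm_conj_entry[OF p D] e pn unfolding Xe by auto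
  moreover have "\<forall>i<n. (W \<circ> p) i \<noteq> 0" using W pn by auto
  ultimately show ?thesis using X unfolding blockform_def by blast
qed



lemma dbm_cls:
  fixes b :: "nat \<Rightarrow> nat" and W :: "nat \<Rightarrow> real" and cls :: "nat \<Rightarrow> nat list"
  assumes "distinct vs" "\<forall>v\<in>set vs. \<forall>x\<in>set (cls v). b x = v" "\<forall>v. distinct (cls v)"
  shows "diag_block_mat (map (\<lambda>v. sign_outer (vec (length (cls v)) (\<lambda>t. W (cls v ! t)))) vs)
           \<in> carrier_mat (length (concat (map cls vs))) (length (concat (map cls vs))) \<and>
         distinct (concat (map cls vs)) \<and>
         (\<forall>a<length (concat (map cls vs)). \<forall>c<length (concat (map cls vs)).
            diag_block_mat (map (\<lambda>v. sign_outer (vec (length (cls v)) (\<lambda>t. W (cls v ! t)))) vs) $$ (a,c)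
            = (if b (concat (map cls vs) ! a) = b (concat (map cls vs) ! c)
               then sgn (W (concat (map cls vs) ! a)) * W (concat (map cls vs) ! c) else 0))"
  using assms
proof (induction vs)
  case Nil
  then show ?case by auto
next
  case (Cons v vs)
  define C where "C = cls v"
  define m where "m = length C"
  define ord where "ord = concat (map cls vs)"
  define B where "B = diag_block_mat (map (\<lambda>v. sign_outer (vec (length (cls v)) (\<lambda>t. W (cls v ! t)))) vs)"
  define A where "A = sign_outer (vec m (\<lambda>t. W (C ! t)))"
  have IH: "B \<in> carrier_mat (length ord) (length ord)" "distinct ord"
    "\<forall>a<length ord. \<forall>c<length ord. B $$ (a,c) = (if b (ord ! a) = b (ord ! c) then sgn (W (ord ! a)) * W (ord ! c) else 0)"
    using Cons unfolding B_def ord_def by auto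
  have A: "A \<in> carrier_mat m m" unfolding A_def sign_outer_def by auto
  have bC: "\<forall>x\<in>set C. b x = v" using Cons.prems unfolding C_def by auto
  have bord: "\<forall>x\<in>set ord. b x \<noteq> v" using Cons.prems unfolding ord_def by auto
  have Dm: "diag_block_mat (map (\<lambda>v. sign_outer (vec (length (cls v)) (\<lambda>t. W (cls v ! t)))) (v # vs))
     = four_block_mat A (0\<^sub>m m (length ord)) (0\<^sub>m (length ord) m) B"
    using A IH(1) unfolding A_def B_def C_def m_def by (simp add: Let_def)
  have cc: "concat (map cls (v # vs)) = C @ ord" unfolding C_def ord_def by simp
  have lc: "length (C @ ord) = m + length ord" unfolding m_def by simp
  have dist: "distinct (C @ ord)"
    using IH(2) Cons.prems bC bord unfolding C_def by auto
  have ent: "four_block_mat A (0\<^sub>m m (length ord)) (0\<^sub>m (length ord) m) B $$ (a,c) =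
      (if b ((C @ ord) ! a) = b ((C @ ord) ! c) then sgn (W ((C @ ord) ! a)) * W ((C @ ord) ! c) else 0)"
    if "a < m + length ord" "c < m + length ord" for a c
  proof -
    have inC: "b (C ! k) = v" if "k < m" for k using bC that unfolding m_def by auto
    have inO: "b (ord ! k) \<noteq> v" if "k < length ord" for k using bord that by auto
    have dA: "dim_row A = m" "dim_col A = m" using A by auto
    have dB: "dim_row B = length ord" "dim_col B = length ord" using IH(1) by auto
    show ?thesis
    proof (cases "a < m")
      case True
      note a = this
      show ?thesis
      proof (cases "c < m")
        case True
        then show ?thesis using a that inC[OF a] inC[OF True] dA dB
          by (simp add: nth_append A_def sign_outer_def m_def)
      next
        case False
        have "b ((C @ ord) ! c) \<noteq> v" using False that inO[of "c - m"] by (simp add: nth_append m_def)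
        moreover have "b ((C @ ord) ! a) = v" using a inC[OF a] by (simp add: nth_append m_def)
        ultimately show ?thesis using a False that dA dB by simp
      qed
    next
      case False
      note a = this
      show ?thesis
      proof (cases "c < m")
        case True
        have "b ((C @ ord) ! a) \<noteq> v" using a that inO[of "a - m"] by (simp add: nth_append m_def)
        moreover have "b ((C @ ord) ! c) = v" using True inC[OF True] by (simp add: nth_append m_def)
        ultimately show ?thesis using a True that dA dB by simp
      next
        case False
        then show ?thesis using a that dA dB IH(3) by (simp add: nth_append m_def)
      qed
    qed
  qed
  show ?case unfolding Dm cc lc using A IH(1) dist ent by auto
qed

lemma blockform_Q:
  assumes XS: "X \<in> S_rs_symm n" and bf: "blockform n X"
  shows "X \<in> Q_IbM n"
proof -
  obtain b W where X: "X \<in> carrier_mat n n" and W: "\<forall>i<n. W i \<noteq> (0::real)"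
    and e: "\<forall>i<n. \<forall>j<n. X $$ (i,j) = (if (b i::nat) = b j then sgn (W i) * W j else 0)"
    using bf unfolding blockform_def by auto
  define L where "L = [0..<n]"
  define vs where "vs = remdups (map b L)"
  define cls where "cls v = filter (\<lambda>k. b k = v) L" for v
  define ord where "ord = concat (map cls vs)"
  define ws where "ws = map (\<lambda>v. vec (length (cls v)) (\<lambda>t. W (cls v ! t))) vs"
  define D where "D = diag_block_mat (map sign_outer ws)"
  have Dd: "D = diag_block_mat (map (\<lambda>v. sign_outer (vec (length (cls v)) (\<lambda>t. W (cls v ! t)))) vs)"
    unfolding D_def ws_def by (simp add: o_def)
  have R: "D \<in> carrier_mat (length ord) (length ord) \<and> distinct ord \<and>
         (\<forall>a<length ord. \<forall>c<length ord. D $$ (a,c) = (if b (ord ! a) = b (ord ! c)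
               then sgn (W (ord ! a)) * W (ord ! c) else 0))"
    unfolding Dd ord_def by (rule dbm_cls) (auto simp: vs_def cls_def L_def)
  have setord: "set ord = {..<n}" unfolding ord_def cls_def vs_def L_def by auto
  have lord: "length ord = n" using R setord distinct_card[of ord] by auto
  define q where "q a = (if a < n then ord ! a else a)" for a
  have bq: "bij_betw q {..<n} {..<n}"
  proof -
    have "bij_betw ((!) ord) {..<n} {..<n}" using R setord lord by (intro bij_betw_nth) auto
    then show ?thesis by (rule bij_betw_cong[THEN iffD1, rotated]) (auto simp: q_def)
  qed
  have qp: "q permutes {..<n}" by (rule bij_imp_permutes[OF bq]) (auto simp: q_def)
  define p where "p = inv_into UNIV q"
  have pp: "p permutes {..<n}" unfolding p_def by (rule permutes_inv[OF qp])
  have pn: "p k < n" if "k < n" for k using permutes_in_image[OF pp] that by auto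
  have ordp: "ord ! (p i) = i" if "i < n" for i
    using permutes_inverses(1)[OF qp, of i] pn[OF that] unfolding q_def p_def by auto
  have slen: "sum_list (map dim_vec ws) = n"
    using lord unfolding ws_def ord_def by (simp add: length_concat o_def)
  have wsok: "\<forall>w\<in>set ws. dim_vec w \<le> n \<and> (\<forall>i<dim_vec w. \<bar>w $ i\<bar> > 0)"
  proof
    fix w assume "w \<in> set ws"
    then obtain v where v: "w = vec (length (cls v)) (\<lambda>t. W (cls v ! t))" unfolding ws_def by auto
    have "length (cls v) \<le> n" unfolding cls_def L_def using length_filter_le[of _ "[0..<n]"] by simp
    moreover have "\<bar>W (cls v ! t)\<bar> > 0" if "t < length (cls v)" for t
    proof -
      have "cls v ! t \<in> set (cls v)" using that by simp
      then have "cls v ! t < n" unfolding cls_def L_def by auto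
      then show ?thesis using W by auto
    qed
    ultimately show "dim_vec w \<le> n \<and> (\<forall>i<dim_vec w. \<bar>w $ i\<bar> > 0)" using v by auto
  qed
  have DC: "D \<in> carrier_mat n n" using R lord by simp
  have Xe: "X = perm_matrix n p * D * transpose_mat (perm_matrix n p)"
  proof (rule eq_matI)
    fix i j assume "i < dim_row (perm_matrix n p * D * transpose_mat (perm_matrix n p))"
      "j < dim_col (perm_matrix n p * D * transpose_mat (perm_matrix n p))"
    then have ij: "i < n" "j < n" unfolding perm_matrix_def by auto
    have "(perm_matrix n p * D * transpose_mat (perm_matrix n p)) $$ (i,j) = D $$ (p i, p j)"
      by (rule perm_conj_entry[OF pp DC ij])
    also have "\<dots> = X $$ (i,j)" using R lord pn ij ordp e by auto
    finally show "X $$ (i,j) = (perm_matrix n p * D * transpose_mat (perm_matrix n p)) $$ (i,j)" by simp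
  qed (use X in \<open>auto simp: perm_matrix_def\<close>)
  show ?thesis unfolding Q_IbM_def using XS pp wsok slen Xe unfolding D_def by blast
qed

theorem theorem4p4:
  fixes n :: nat
  shows "Q_IbM n = {X \<in> S_rs_symm n. f_IbM n X = X} \<and>
    (\<forall>X\<in>Q_IbM n. \<exists>Vs. partition_on {..<n} Vs \<and>
           (\<forall>i<n. \<forall>j<n. (\<not> (\<exists>V\<in>Vs. i \<in> V \<and> j \<in> V)) \<longrightarrow> X $$ (i,j) = 0) \<and>
           (\<forall>V\<in>Vs. (\<forall>i\<in>V. \<forall>j\<in>V. X $$ (i,j) \<noteq> 0) \<and>
                    social_balance (submatrix X V V)))"
proof
  show "Q_IbM n = {X \<in> S_rs_symm n. f_IbM n X = X}"
  proof
    show "Q_IbM n \<subseteq> {X \<in> S_rs_symm n. f_IbM n X = X}"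
      using Q_blockform blockform_fix unfolding Q_IbM_def by blast
    show "{X \<in> S_rs_symm n. f_IbM n X = X} \<subseteq> Q_IbM n"
      using fix_blockform blockform_Q by blast
  qed
  show "\<forall>X\<in>Q_IbM n. \<exists>Vs. partition_on {..<n} Vs \<and>
           (\<forall>i<n. \<forall>j<n. (\<not> (\<exists>V\<in>Vs. i \<in> V \<and> j \<in> V)) \<longrightarrow> X $$ (i,j) = 0) \<and>
           (\<forall>V\<in>Vs. (\<forall>i\<in>V. \<forall>j\<in>V. X $$ (i,j) \<noteq> 0) \<and>
                    social_balance (submatrix X V V))"
    using Q_blockform blockform_part2 by blast
qed


end
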